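(* Let $(X,D)$ be a JS-metric space with a partial order $\le$, and let $F:X^2\to X$ have the mixed monotone property and satisfy, for some $k\in[0,1)$, $D(F(x,y),F(u,v))\le \frac{k}{2}(D(x,u)+D(y,v))$ for all $x\ge u$, $y\le v$. Suppose $(x,y)$ and $(x^*,y^* )$ are coupled fixed points of $F$ that are incomparable in $X^2$, and there exists $(z_1,z_2)\in X^2$ which is an upper bound or a lower bound (in $X^2$) of both $(x,y)$ and $(x^*,y^* )$, with $D(x,z_1),D(y,z_2),D(x^*,z_1),D(y^*,z_2)<\infty$. Then $x=x^*$ and $y=y^*$.
   Context: Arithmetic is carried out in the extended reals. $(X,D)$ is a JS-metric space: $D:X\times X\to[0,\infty]$ satisfies (D1) $D(x,y)=0\Rightarrow x=y$; (D2) $D(x,y)=D(y,x)$; (D3) there exists $c>0$ such that for all $x,y\in X$ and every sequence $(x_n)$ with $\lim_n D(x_n,x)=0$, $D(x,y)\le c\limsup_n D(x_n,y)$. $F$ has the mixed monotone property if $x_1\le x_2\Rightarrow F(x_1,y)\le F(x_2,y)$ and $y_1\le y_2\Rightarrow F(x,y_1)\ge F(x,y_2)$. A coupled fixed point is $(x,y)$ with $x=F(x,y)$, $y=F(y,x)$. The partial order on $X^2$ is $(u,v)\le(x,y)\iff u\le x$ and $v\ge y$; two elements are comparable if one is $\le$ the other. *)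

theory Defs
  imports "HOL-Analysis.Analysis"
begin

text \<open>JS-metric (Jleli--Samet generalized metric) with values in [0,\<infinity>],
  modelled as extended reals that are nonnegative.\<close>
definition js_metric :: "('a \<Rightarrow> 'a \<Rightarrow> ereal) \<Rightarrow> bool" where
  "js_metric D \<longleftrightarrow>
     (\<forall>x y. 0 \<le> D x y) \<and>
     (\<forall>x y. D x y = 0 \<longrightarrow> x = y) \<and>
     (\<forall>x y. D x y = D y x) \<and>
     (\<exists>c::real. c > 0 \<and> (\<forall>x y (s::nat \<Rightarrow> 'a).
         ((\<lambda>n. D (s n) x) \<longlonglongrightarrow> 0) \<longrightarrow>
         D x y \<le> ereal c * limsup (\<lambda>n. D (s n) y)))"

definition partial_order_rel :: "('a \<Rightarrow> 'a \<Rightarrow> bool) \<Rightarrow> bool" where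
  "partial_order_rel le \<longleftrightarrow>
     (\<forall>x. le x x) \<and> (\<forall>x y. le x y \<and> le y x \<longrightarrow> x = y) \<and>
     (\<forall>x y z. le x y \<and> le y z \<longrightarrow> le x z)"

definition mixed_monotone :: "('a \<Rightarrow> 'a \<Rightarrow> bool) \<Rightarrow> ('a \<Rightarrow> 'a \<Rightarrow> 'a) \<Rightarrow> bool" where
  "mixed_monotone le F \<longleftrightarrow>
     (\<forall>x1 x2 y. le x1 x2 \<longrightarrow> le (F x1 y) (F x2 y)) \<and>
     (\<forall>x y1 y2. le y1 y2 \<longrightarrow> le (F x y2) (F x y1))"

definition coupled_fixed_point :: "('a \<Rightarrow> 'a \<Rightarrow> 'a) \<Rightarrow> 'a \<Rightarrow> 'a \<Rightarrow> bool" where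
  "coupled_fixed_point F x y \<longleftrightarrow> x = F x y \<and> y = F y x"

definition prod_le :: "('a \<Rightarrow> 'a \<Rightarrow> bool) \<Rightarrow> 'a \<times> 'a \<Rightarrow> 'a \<times> 'a \<Rightarrow> bool" where
  "prod_le le p q \<longleftrightarrow> le (fst p) (fst q) \<and> le (snd q) (snd p)"

definition prod_comparable :: "('a \<Rightarrow> 'a \<Rightarrow> bool) \<Rightarrow> 'a \<times> 'a \<Rightarrow> 'a \<times> 'a \<Rightarrow> bool" where
  "prod_comparable le p q \<longleftrightarrow> prod_le le p q \<or> prod_le le q p"

end

theory Submission
  imports Defs
begin

fun itr :: "('a \<Rightarrow> 'a \<Rightarrow> 'a) \<Rightarrow> 'a \<Rightarrow> 'a \<Rightarrow> nat \<Rightarrow> 'a \<times> 'a" where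
  "itr F a b 0 = (a, b)"
| "itr F a b (Suc n) = (F (fst (itr F a b n)) (snd (itr F a b n)), F (snd (itr F a b n)) (fst (itr F a b n)))"

lemma order_up:
  assumes po: "partial_order_rel le" and mm: "mixed_monotone le F"
    and cf: "coupled_fixed_point F x y" and h: "prod_le le (x, y) (a, b)"
  shows "prod_le le (x, y) (itr F a b n)"
proof (induction n)
  case 0 then show ?case using h by simp
next
  case (Suc n)
  obtain p q where pq: "itr F a b n = (p, q)" by (cases "itr F a b n")
  have 1: "le x p" "le q y" using Suc pq by (auto simp: prod_le_def)
  have tr: "\<And>u v w. le u v \<Longrightarrow> le v w \<Longrightarrow> le u w" using po unfolding partial_order_rel_def by blast
  have m1: "\<And>x1 x2 y. le x1 x2 \<Longrightarrow> le (F x1 y) (F x2 y)"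
    and m2: "\<And>x y1 y2. le y1 y2 \<Longrightarrow> le (F x y2) (F x y1)" using mm unfolding mixed_monotone_def by blast+
  have fx: "x = F x y" "y = F y x" using cf unfolding coupled_fixed_point_def by auto
  have "le (F x y) (F p q)" using tr[OF m1[OF 1(1)] m2[OF 1(2)]] .
  moreover have "le (F q p) (F y x)" using tr[OF m1[OF 1(2)] m2[OF 1(1)]] .
  ultimately show ?case using pq fx by (simp add: prod_le_def)
qed

lemma order_down:
  assumes po: "partial_order_rel le" and mm: "mixed_monotone le F"
    and cf: "coupled_fixed_point F x y" and h: "prod_le le (a, b) (x, y)"
  shows "prod_le le (itr F a b n) (x, y)"
proof (induction n)
  case 0 then show ?case using h by simp
next
  case (Suc n)
  obtain p q where pq: "itr F a b n = (p, q)" by (cases "itr F a b n")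
  have 1: "le p x" "le y q" using Suc pq by (auto simp: prod_le_def)
  have tr: "\<And>u v w. le u v \<Longrightarrow> le v w \<Longrightarrow> le u w" using po unfolding partial_order_rel_def by blast
  have m1: "\<And>x1 x2 y. le x1 x2 \<Longrightarrow> le (F x1 y) (F x2 y)"
    and m2: "\<And>x y1 y2. le y1 y2 \<Longrightarrow> le (F x y2) (F x y1)" using mm unfolding mixed_monotone_def by blast+
  have fx: "x = F x y" "y = F y x" using cf unfolding coupled_fixed_point_def by auto
  have "le (F p q) (F x y)" using tr[OF m1[OF 1(1)] m2[OF 1(2)]] .
  moreover have "le (F y x) (F q p)" using tr[OF m1[OF 1(2)] m2[OF 1(1)]] .
  ultimately show ?case using pq fx by (simp add: prod_le_def)
qed

lemma step:
  assumes js: "js_metric D" and k: "0 \<le> k"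
    and con: "\<And>x y u v. le u x \<Longrightarrow> le y v \<Longrightarrow>
           D (F x y) (F u v) \<le> ereal (k / 2) * (D x u + D y v)"
    and cf: "coupled_fixed_point F x y"
    and h: "prod_le le (x, y) (a, b) \<or> prod_le le (a, b) (x, y)"
  shows "D x (F a b) + D y (F b a) \<le> ereal k * (D x a + D y b)"
proof -
  note J = js[unfolded js_metric_def]
  have sym: "\<And>u v. D u v = D v u" using conjunct1[OF conjunct2[OF conjunct2[OF J]]] by blast
  have nn: "\<And>u v. 0 \<le> D u v" using conjunct1[OF J] by blast
  have fx: "F x y = x" "F y x = y" using cf unfolding coupled_fixed_point_def by auto
  have A: "D x (F a b) \<le> ereal (k / 2) * (D x a + D y b)"
   and B: "D y (F b a) \<le> ereal (k / 2) * (D x a + D y b)"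
  proof -
    { assume "prod_le le (x, y) (a, b)"
      hence l: "le x a" "le b y" by (auto simp: prod_le_def)
      have "D x (F a b) = D (F a b) (F x y)" using fx(1) sym[of x "F a b"] by metis
      also have "\<dots> \<le> ereal (k / 2) * (D a x + D b y)" using con[OF l] .
      finally have 1: "D x (F a b) \<le> ereal (k / 2) * (D x a + D y b)" using sym[of a x] sym[of b y] by metis
      have "D y (F b a) = D (F y x) (F b a)" using fx by simp
      also have "\<dots> \<le> ereal (k / 2) * (D y b + D x a)" using con[OF l(2) l(1)] .
      finally have 2: "D y (F b a) \<le> ereal (k / 2) * (D x a + D y b)" by (simp add: add.commute)
      note 1 2 }
    moreover
    { assume "prod_le le (a, b) (x, y)"
      hence l: "le a x" "le y b" by (auto simp: prod_le_def)
      have "D x (F a b) = D (F x y) (F a b)" using fx by simp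
      also have "\<dots> \<le> ereal (k / 2) * (D x a + D y b)" using con[OF l] .
      finally have 1: "D x (F a b) \<le> ereal (k / 2) * (D x a + D y b)" .
      have "D y (F b a) = D (F b a) (F y x)" using fx(2) sym[of y "F b a"] by metis
      also have "\<dots> \<le> ereal (k / 2) * (D b y + D a x)" using con[OF l(2) l(1)] .
      finally have 2: "D y (F b a) \<le> ereal (k / 2) * (D x a + D y b)" using sym[of a x] sym[of b y] by (metis add.commute)
      note 1 2 }
    ultimately show "D x (F a b) \<le> ereal (k / 2) * (D x a + D y b)"
       "D y (F b a) \<le> ereal (k / 2) * (D x a + D y b)" using h by blast+
  qed
  have "D x (F a b) + D y (F b a) \<le> ereal (k / 2) * (D x a + D y b) + ereal (k / 2) * (D x a + D y b)"
    using add_mono[OF A B] .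
  also have "\<dots> = ereal k * (D x a + D y b)"
  proof -
    have S: "0 \<le> D x a + D y b" using nn by simp
    show ?thesis
    proof (cases "D x a + D y b")
      case (real r)
      then show ?thesis by (simp add: field_simps)
    next
      case PInf
      then show ?thesis using k by (cases "k = 0") auto
    next
      case MInf
      then show ?thesis using S unfolding MInf by simp
    qed
  qed
  finally show ?thesis .
qed

lemma conv:
  assumes js: "js_metric D" and k: "0 \<le> k" "k < 1"
    and con: "\<And>x y u v. le u x \<Longrightarrow> le y v \<Longrightarrow>
           D (F x y) (F u v) \<le> ereal (k / 2) * (D x u + D y v)"
    and cf: "coupled_fixed_point F x y"
    and orient: "\<And>n. prod_le le (x, y) (itr F z1 z2 n) \<or> prod_le le (itr F z1 z2 n) (x, y)"
    and f1: "D x z1 < \<infinity>" and f2: "D y z2 < \<infinity>"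
  shows "(\<lambda>n. D (fst (itr F z1 z2 n)) x) \<longlonglongrightarrow> 0"
    and "(\<lambda>n. D (snd (itr F z1 z2 n)) y) \<longlonglongrightarrow> 0"
proof -
  note J = js[unfolded js_metric_def]
  have sym: "\<And>u v. D u v = D v u" using conjunct1[OF conjunct2[OF conjunct2[OF J]]] by blast
  have nn: "\<And>u v. 0 \<le> D u v" using conjunct1[OF J] by blast
  define d where "d n = D x (fst (itr F z1 z2 n)) + D y (snd (itr F z1 z2 n))" for n
  have dstep: "d (Suc n) \<le> ereal k * d n" for n
  proof -
    obtain a b where ab: "itr F z1 z2 n = (a, b)" by (cases "itr F z1 z2 n")
    have "D x (F a b) + D y (F b a) \<le> ereal k * (D x a + D y b)"
      using step[OF js k(1) con cf] orient[of n] ab by simp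
    thus ?thesis using ab by (simp add: d_def)
  qed
  have dpow: "d n \<le> ereal (k ^ n) * d 0" for n
  proof (induction n)
    case 0 then show ?case by simp
  next
    case (Suc n)
    have "d (Suc n) \<le> ereal k * d n" by (rule dstep)
    also have "\<dots> \<le> ereal k * (ereal (k ^ n) * d 0)"
      using Suc k by (intro ereal_mult_left_mono) auto
    also have "\<dots> = ereal (k ^ Suc n) * d 0" by (simp add: mult.assoc[symmetric])
    finally show ?case .
  qed
  obtain r where r: "d 0 = ereal r" "0 \<le> r"
  proof -
    have "d 0 \<noteq> \<infinity>" "0 \<le> d 0" using f1 f2 nn by (auto simp: d_def)
    then show ?thesis using that by (cases "d 0") auto
  qed
  have lim: "(\<lambda>n. ereal (k ^ n * r)) \<longlonglongrightarrow> 0"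
  proof -
    have "(\<lambda>n. k ^ n * r) \<longlonglongrightarrow> 0 * r"
      by (intro tendsto_mult tendsto_const LIMSEQ_power_zero) (use k in auto)
    hence "(\<lambda>n. ereal (k ^ n * r)) \<longlonglongrightarrow> ereal 0" by (simp add: tendsto_ereal)
    thus ?thesis by (simp add: zero_ereal_def)
  qed
  have bnd: "d n \<le> ereal (k ^ n * r)" for n using dpow[of n] r by simp
  show "(\<lambda>n. D (fst (itr F z1 z2 n)) x) \<longlonglongrightarrow> 0"
  proof (rule tendsto_sandwich[OF _ _ tendsto_const lim])
    show "\<forall>\<^sub>F n in sequentially. 0 \<le> D (fst (itr F z1 z2 n)) x" using nn by simp
    show "\<forall>\<^sub>F n in sequentially. D (fst (itr F z1 z2 n)) x \<le> ereal (k ^ n * r)"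
    proof (intro always_eventually allI)
      fix n
      have "D (fst (itr F z1 z2 n)) x \<le> d n" using nn[of y "snd (itr F z1 z2 n)"] sym
        unfolding d_def by (metis add_increasing2 order_refl)
      thus "D (fst (itr F z1 z2 n)) x \<le> ereal (k ^ n * r)" using bnd[of n] by simp
    qed
  qed
  show "(\<lambda>n. D (snd (itr F z1 z2 n)) y) \<longlonglongrightarrow> 0"
  proof (rule tendsto_sandwich[OF _ _ tendsto_const lim])
    show "\<forall>\<^sub>F n in sequentially. 0 \<le> D (snd (itr F z1 z2 n)) y" using nn by simp
    show "\<forall>\<^sub>F n in sequentially. D (snd (itr F z1 z2 n)) y \<le> ereal (k ^ n * r)"
    proof (intro always_eventually allI)
      fix n
      have "D (snd (itr F z1 z2 n)) y \<le> d n" using nn[of x "fst (itr F z1 z2 n)"] sym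
        unfolding d_def by (metis add_increasing order_refl)
      thus "D (snd (itr F z1 z2 n)) y \<le> ereal (k ^ n * r)" using bnd[of n] by simp
    qed
  qed
qed

lemma sep:
  assumes js: "js_metric D"
    and l1: "(\<lambda>n. D (s n) x) \<longlonglongrightarrow> 0" and l2: "(\<lambda>n. D (s n) xs) \<longlonglongrightarrow> 0"
  shows "x = xs"
proof -
  note J = js[unfolded js_metric_def]
  have nn: "\<And>u v. 0 \<le> D u v" using conjunct1[OF J] by blast
  have z: "\<And>u v. D u v = 0 \<Longrightarrow> u = v" using conjunct1[OF conjunct2[OF J]] by blast
  obtain c :: real where c: "\<forall>x y (s::nat \<Rightarrow> _). ((\<lambda>n. D (s n) x) \<longlonglongrightarrow> 0) \<longrightarrow>
         D x y \<le> ereal c * limsup (\<lambda>n. D (s n) y)"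
    using conjunct2[OF conjunct2[OF conjunct2[OF J]]] by blast
  have "D x xs \<le> ereal c * limsup (\<lambda>n. D (s n) xs)" using c l1 by blast
  also have "limsup (\<lambda>n. D (s n) xs) = 0" using lim_imp_Limsup[OF _ l2] by simp
  finally have "D x xs \<le> 0" by simp
  hence "D x xs = 0" using nn[of x xs] by simp
  thus ?thesis by (rule z)
qed

theorem mainTheorem7:
  fixes D :: "'a \<Rightarrow> 'a \<Rightarrow> ereal"
    and le :: "'a \<Rightarrow> 'a \<Rightarrow> bool"
    and F :: "'a \<Rightarrow> 'a \<Rightarrow> 'a"
    and k :: real
    and x y xs ys z1 z2 :: 'a
  assumes "js_metric D"
    and "partial_order_rel le"
    and "mixed_monotone le F"
    and "0 \<le> k" and "k < 1"
    and "\<And>x y u v. le u x \<Longrightarrow> le y v \<Longrightarrow>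
           D (F x y) (F u v) \<le> ereal (k / 2) * (D x u + D y v)"
    and "coupled_fixed_point F x y"
    and "coupled_fixed_point F xs ys"
    and "\<not> prod_comparable le (x, y) (xs, ys)"
    and "(prod_le le (x, y) (z1, z2) \<and> prod_le le (xs, ys) (z1, z2)) \<or>
         (prod_le le (z1, z2) (x, y) \<and> prod_le le (z1, z2) (xs, ys))"
    and "D x z1 < \<infinity>" and "D y z2 < \<infinity>"
    and "D xs z1 < \<infinity>" and "D ys z2 < \<infinity>"
  shows "x = xs \<and> y = ys"
proof -
  have o1: "\<And>n. prod_le le (x, y) (itr F z1 z2 n) \<or> prod_le le (itr F z1 z2 n) (x, y)"
    and o2: "\<And>n. prod_le le (xs, ys) (itr F z1 z2 n) \<or> prod_le le (itr F z1 z2 n) (xs, ys)"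
    using assms(10) order_up[OF assms(2,3,7)] order_down[OF assms(2,3,7)]
      order_up[OF assms(2,3,8)] order_down[OF assms(2,3,8)] by blast+
  note c1 = conv[OF assms(1,4,5,6,7) o1 assms(11,12)]
  note c2 = conv[OF assms(1,4,5,6,8) o2 assms(13,14)]
  show ?thesis using sep[OF assms(1) c1(1) c2(1)] sep[OF assms(1) c1(2) c2(2)] by simp
qed

end
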